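(* Let $f$ be a probability density on $\mathbb{R}$ with $f\in\mathbb{L}_2$ and $f(x)=f(-x)$ for all $x$. Let $\Theta$ be a compact subset of $(0,1/2)\times(\mathbb{R}^2\setminus\Delta)$, $\Delta=\{(x,x):x\in\mathbb{R}\}$, let $\theta_0=(p_0,\alpha_0,\beta_0)\in\Theta$ and $g(x)=p_0f(x-\alpha_0)+(1-p_0)f(x-\beta_0)$. Let $W$ be a probability measure on $\mathbb{R}$ which is absolutely continuous with respect to Lebesgue measure and whose support is $\mathbb{R}$. For $\theta\in\Theta$ define $$S(\theta)=\int_{\mathbb{R}}\left(\mathrm{Im}\left(\frac{g^*(u)}{M(\theta,u)}\right)\right)^2dW(u),$$ where $M(\theta,u)=pe^{iu\alpha}+(1-p)e^{iu\beta}$ for $\theta=(p,\alpha,\beta)$. Then $S$ is a contrast function: for all $\theta\in\Theta$, $S(\theta)\ge 0$, and $S(\theta)=0$ if and only if $\theta=\theta_0$.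
   Context: $f^*(u)=\int_{\mathbb{R}}e^{ixu}f(x)\,dx$ denotes the Fourier transform. *)

theory Defs
  imports "HOL-Analysis.Analysis" "HOL-Probability.Probability"
begin

definition fourier :: "(real \<Rightarrow> real) \<Rightarrow> real \<Rightarrow> complex" where
  "fourier f u = (LINT x|lborel. cis (x * u) * complex_of_real (f x))"

definition prob_density :: "(real \<Rightarrow> real) \<Rightarrow> bool" where
  "prob_density f \<longleftrightarrow> f \<in> borel_measurable lborel \<and> (\<forall>x. 0 \<le> f x)
     \<and> integrable lborel f \<and> (LINT x|lborel. f x) = 1"

definition measure_support :: "real measure \<Rightarrow> real set" where
  "measure_support W = {x. \<forall>e>0. 0 < emeasure W (ball x e)}"

definition mixM :: "real \<times> real \<times> real \<Rightarrow> real \<Rightarrow> complex" where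
  "mixM \<theta> u = (case \<theta> of (p, a, b) \<Rightarrow>
      complex_of_real p * cis (u * a) + complex_of_real (1 - p) * cis (u * b))"

definition contrastS :: "real measure \<Rightarrow> (real \<Rightarrow> real) \<Rightarrow> real \<times> real \<times> real \<Rightarrow> real" where
  "contrastS W g \<theta> = (LINT u|W. (Im (fourier g u / mixM \<theta> u))\<^sup>2)"

end

theory Submission
  imports Defs
begin

lemma deriv_e: "((\<lambda>u::real. exp (\<i> * complex_of_real (w * u))) has_vector_derivative (\<i> * complex_of_real w * exp (\<i> * complex_of_real (w * u)))) (at u)"
  by (auto intro!: derivative_eq_intros simp: Re_exp Im_exp has_vector_derivative_complex_iff algebra_simps)

lemma deriv_sum_e: "finite K \<Longrightarrow> ((\<lambda>u::real. \<Sum>k\<in>K. c k * exp (\<i> * complex_of_real (om k * u))) has_vector_derivative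
   (\<Sum>k\<in>K. c k * (\<i> * complex_of_real (om k) * exp (\<i> * complex_of_real (om k * u))))) (at u)"
  by (intro has_vector_derivative_sum has_vector_derivative_mult_right deriv_e)

lemma exp_sum_zero:
  fixes om :: "'k \<Rightarrow> real" and c :: "'k \<Rightarrow> complex"
  assumes "finite K" "open S" "u0 \<in> S"
    "\<forall>u\<in>S. (\<Sum>k\<in>K. c k * exp (\<i> * complex_of_real (om k * u))) = 0"
  shows "(\<Sum>k\<in>{k\<in>K. om k = w}. c k) = 0"
  using assms
proof (induction "card (om ` K)" arbitrary: K c w rule: less_induct)
  case less
  show ?case
  proof (cases "K = {}")
    case True then show ?thesis by simp
  next
    case False
    then obtain k0 where k0: "k0 \<in> K" by blast
    define w0 where "w0 = om k0"
    define K' where "K' = {k\<in>K. om k \<noteq> w0}"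
    define c' where "c' = (\<lambda>k. c k * (\<i> * complex_of_real (om k - w0)))"
    let ?e = "\<lambda>w u. exp (\<i> * complex_of_real (w * u))"
    have fK': "finite K'" using less.prems(1) by (simp add: K'_def)
    have Z: "(\<Sum>k\<in>K'. c' k * ?e (om k) u) = 0" if u: "u \<in> S" for u
    proof -
      let ?F = "\<lambda>u. \<Sum>k\<in>K. c k * ?e (om k) u"
      let ?D = "\<Sum>k\<in>K. c k * (\<i> * complex_of_real (om k) * ?e (om k) u)"
      have d1: "(?F has_vector_derivative ?D) (at u)" by (rule deriv_sum_e[OF less.prems(1)])
      have d2: "((\<lambda>_. 0) has_vector_derivative ?D) (at u)"
        by (rule has_vector_derivative_transform_within_open[OF d1 less.prems(2) u]) (use less.prems(4) in auto)
      have "?D = 0"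
        using vector_derivative_unique_at[OF d2 has_vector_derivative_const] .
      moreover have "?F u = 0" using less.prems(4) u by auto
      ultimately have "?D - \<i> * complex_of_real w0 * ?F u = 0" by simp
      then have "(\<Sum>k\<in>K. c' k * ?e (om k) u) = 0"
        by (simp add: c'_def sum_distrib_left sum_subtractf[symmetric] algebra_simps)
      moreover have "(\<Sum>k\<in>K. c' k * ?e (om k) u) = (\<Sum>k\<in>K'. c' k * ?e (om k) u)"
        by (rule sum.mono_neutral_right[OF less.prems(1)]) (auto simp: K'_def c'_def)
      ultimately show ?thesis by simp
    qed
    have lt: "card (om ` K') < card (om ` K)"
    proof (rule psubset_card_mono)
      show "finite (om ` K)" using less.prems(1) by simp
      have "w0 \<in> om ` K" "w0 \<notin> om ` K'" using k0 by (auto simp: K'_def w0_def)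
      then show "om ` K' \<subset> om ` K" by (auto simp: K'_def)
    qed
    have IH: "(\<Sum>k\<in>{k\<in>K'. om k = w}. c' k) = 0" for w
      using less.hyps[OF lt fK' less.prems(2,3)] Z by blast
    have other: "(\<Sum>k\<in>{k\<in>K. om k = w}. c k) = 0" if "w \<noteq> w0" for w
    proof -
      have "{k\<in>K'. om k = w} = {k\<in>K. om k = w}" using that by (auto simp: K'_def)
      then have "(\<Sum>k\<in>{k\<in>K. om k = w}. c k) * (\<i> * complex_of_real (w - w0)) = 0"
        using IH[of w] by (simp add: c'_def sum_distrib_right)
      then show ?thesis using that by simp
    qed
    have split: "(\<Sum>k\<in>K. c k * ?e (om k) u0) =
       (\<Sum>k\<in>{k\<in>K. om k = w0}. c k * ?e (om k) u0) + (\<Sum>k\<in>K'. c k * ?e (om k) u0)"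
      unfolding K'_def using less.prems(1)
      by (subst sum.union_disjoint[symmetric]) (auto intro!: sum.cong)
    have "(\<Sum>k\<in>K'. c k * ?e (om k) u0) = (\<Sum>w\<in>om ` K'. \<Sum>k\<in>{k\<in>K'. om k = w}. c k * ?e (om k) u0)"
      by (rule sum.group[symmetric]) (use fK' in auto)
    also have "\<dots> = (\<Sum>w\<in>om ` K'. (\<Sum>k\<in>{k\<in>K'. om k = w}. c k) * ?e w u0)"
      by (auto simp: sum_distrib_right intro!: sum.cong)
    also have "\<dots> = 0"
    proof (intro sum.neutral ballI)
      fix w assume "w \<in> om ` K'"
      then have "w \<noteq> w0" by (auto simp: K'_def)
      moreover have "{k\<in>K'. om k = w} = {k\<in>K. om k = w}" using \<open>w \<noteq> w0\<close> by (auto simp: K'_def)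
      ultimately show "(\<Sum>k\<in>{k\<in>K'. om k = w}. c k) * ?e w u0 = 0" using other by simp
    qed
    finally have s2: "(\<Sum>k\<in>K'. c k * ?e (om k) u0) = 0" .
    have "(\<Sum>k\<in>{k\<in>K. om k = w0}. c k * ?e (om k) u0) = (\<Sum>k\<in>{k\<in>K. om k = w0}. c k) * ?e w0 u0"
      by (auto simp: sum_distrib_right intro!: sum.cong)
    with split s2 less.prems(3,4) have "(\<Sum>k\<in>{k\<in>K. om k = w0}. c k) * ?e w0 u0 = 0" by simp
    then have w0z: "(\<Sum>k\<in>{k\<in>K. om k = w0}. c k) = 0" by simp
    show ?thesis using other w0z by (cases "w = w0") auto
  qed
qed

definition E4 :: "real \<Rightarrow> real \<Rightarrow> real \<Rightarrow> real \<Rightarrow> real \<Rightarrow> real \<Rightarrow> real \<Rightarrow> real \<Rightarrow> real \<Rightarrow> real" where "E4 xp xm yp ym App Apm Amp Amm w =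
   App * ((if xp - yp = w then 1 else 0) - (if yp - xp = w then 1 else 0))
 + Apm * ((if xp - ym = w then 1 else 0) - (if ym - xp = w then 1 else 0))
 + Amp * ((if xm - yp = w then 1 else 0) - (if yp - xm = w then 1 else 0))
 + Amm * ((if xm - ym = w then 1 else 0) - (if ym - xm = w then 1 else 0))"

lemma E4_main:
  fixes xp xm yp ym App Apm Amp Amm :: real
  assumes "xm < xp" "ym < yp" "App > 0" "Apm > 0" "Amp > 0" "Amm > 0"
    and E: "\<And>w. E4 xp xm yp ym App Apm Amp Amm w = 0"
  shows "xp + xm = yp + ym"
proof (rule ccontr)
  assume ne: "xp + xm \<noteq> yp + ym"
  show False
  proof (cases "xp + xm > yp + ym")
    case True
    have "E4 xp xm yp ym App Apm Amp Amm (xp - ym) = 0" by (rule E)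
    then show False using assms True unfolding E4_def by (auto split: if_split_asm)
  next
    case False
    then have lt: "xp + xm < yp + ym" using ne by simp
    have "E4 xp xm yp ym App Apm Amp Amm (yp - xm) = 0" by (rule E)
    then show False using assms lt unfolding E4_def by (auto split: if_split_asm)
  qed
qed

lemma E4_main2:
  fixes xp xm yp ym App Apm Amp Amm :: real
  assumes "xm < xp" "ym < yp" "App > 0" "Apm > 0" "Amp > 0" "Amm > 0"
    and E: "\<And>w. E4 xp xm yp ym App Apm Amp Amm w = 0"
    and mid: "xp + xm = yp + ym"
  shows "Apm = Amp" "xp \<noteq> yp \<Longrightarrow> App = Amm"
proof -
  have "E4 xp xm yp ym App Apm Amp Amm (xp - ym) = 0" by (rule E)
  then show "Apm = Amp" using assms unfolding E4_def by (auto split: if_split_asm)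
next
  assume "xp \<noteq> yp"
  have "E4 xp xm yp ym App Apm Amp Amm (xp - yp) = 0" by (rule E)
  then show "App = Amm" using assms \<open>xp \<noteq> yp\<close> unfolding E4_def by (auto split: if_split_asm)
qed

lemma E4_swapx: "E4 xp xm yp ym App Apm Amp Amm w = E4 xm xp yp ym Amp Amm App Apm w"
  unfolding E4_def by linarith
lemma E4_swapy: "E4 xp xm yp ym App Apm Amp Amm w = E4 xp xm ym yp Apm App Amm Amp w"
  unfolding E4_def by linarith

lemma E4_final:
  fixes xp xm yp ym Ap Am Bp Bm :: real
  assumes "xm < xp" "ym < yp" "Ap > 0" "Am > 0" "Bp > 0" "Bm > 0" "Ap \<noteq> Am"
    and E: "\<And>w. E4 xp xm yp ym (Ap*Bp) (Ap*Bm) (Am*Bp) (Am*Bm) w = 0"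
  shows "xp = yp \<and> xm = ym \<and> Ap * Bm = Am * Bp"
proof -
  have pos: "Ap*Bp > 0" "Ap*Bm > 0" "Am*Bp > 0" "Am*Bm > 0" using assms by auto
  have mid: "xp + xm = yp + ym" by (rule E4_main[OF assms(1,2) pos E])
  have 1: "Ap * Bm = Am * Bp" by (rule E4_main2(1)[OF assms(1,2) pos E mid])
  have "xp = yp"
  proof (rule ccontr)
    assume "xp \<noteq> yp"
    have 2: "Ap * Bp = Am * Bm" by (rule E4_main2(2)[OF assms(1,2) pos E mid \<open>xp \<noteq> yp\<close>])
    have "(Ap * Bm) * (Ap * Bp) = (Am * Bp) * (Am * Bm)" using 1 2 by simp
    then have "(Ap * Ap) * (Bp * Bm) = (Am * Am) * (Bp * Bm)" by (simp add: algebra_simps)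
    then have "Ap * Ap = Am * Am" using assms(5,6) by simp
    then have "Ap = Am" using assms(3,4)
      by (metis abs_of_pos power2_eq_square real_sqrt_abs)
    then show False using assms(7) by simp
  qed
  then show ?thesis using mid 1 by simp
qed

definition omf :: "real \<Rightarrow> real \<Rightarrow> real \<Rightarrow> real \<Rightarrow> bool \<times> bool \<times> bool \<Rightarrow> real" where
  "omf a0 b0 a b k = (case k of (i, j, s) \<Rightarrow> (if s then 1 else -1) * ((if i then a0 else b0) - (if j then a else b)))"
definition cf :: "real \<Rightarrow> real \<Rightarrow> bool \<times> bool \<times> bool \<Rightarrow> real" where
  "cf p0 p k = (case k of (i, j, s) \<Rightarrow> (if s then 1 else -1) * (if i then p0 else 1 - p0) * (if j then p else 1 - p))"

lemma UNIV_bool3: "(UNIV :: (bool \<times> bool \<times> bool) set) =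
  {(True,True,True),(True,True,False),(True,False,True),(True,False,False),
   (False,True,True),(False,True,False),(False,False,True),(False,False,False)}"
  by auto

lemma sum_bool3: "(\<Sum>k\<in>(UNIV :: (bool \<times> bool \<times> bool) set). h k) =
  h (True,True,True) + h (True,True,False) + h (True,False,True) + h (True,False,False) +
  h (False,True,True) + h (False,True,False) + h (False,False,True) + h (False,False,False)"
  by (simp add: UNIV_bool3 add.assoc)

lemma ind_helper1: "(-1 * (x - y) = (w::real)) = (y - x = w)" by auto
definition ind :: "bool \<Rightarrow> real" where "ind c = (if c then 1 else 0)"
lemma ind_helper2: "(if c then (k::real) else 0) = k * ind c" by (simp add: ind_def)

lemma sum_E4: "(\<Sum>k\<in>{k\<in>UNIV. omf a0 b0 a b k = w}. cf p0 p k) =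
   E4 a0 b0 a b (p0*p) (p0*(1-p)) ((1-p0)*p) ((1-p0)*(1-p)) w"
  apply (subst sum.inter_filter, simp)
  apply (subst sum_bool3)
  unfolding omf_def cf_def E4_def prod.case if_True if_False
  by (simp only: ind_helper1 ind_helper2 mult_1_left) (simp add: algebra_simps split del: if_split)

lemma params_eq:
  fixes p0 p a0 b0 a b :: real
  assumes "0<p0" "p0<1/2" "0<p" "p<1/2" "a0\<noteq>b0" "a\<noteq>b"
    and H: "\<And>w. E4 a0 b0 a b (p0*p) (p0*(1-p)) ((1-p0)*p) ((1-p0)*(1-p)) w = 0"
  shows "p = p0 \<and> a = a0 \<and> b = b0"
proof -
  have ne: "p0 \<noteq> 1 - p0" "1 - p0 \<noteq> p0" using assms by auto
  have pos: "p0 > 0" "1 - p0 > 0" "p > 0" "1 - p > 0" using assms by auto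
  have lt: "p0 * p < (1 - p0) * (1 - p)"
    using assms by (intro mult_strict_mono) auto
  consider "b0 < a0" "b < a" | "b0 < a0" "a < b" | "a0 < b0" "b < a" | "a0 < b0" "a < b"
    using assms(5,6) by linarith
  then show ?thesis
  proof cases
    case 1
    have "a0 = a \<and> b0 = b \<and> p0 * (1-p) = (1-p0) * p"
      by (rule E4_final[OF 1 pos(1,2,3,4) ne(1) H])
    then show ?thesis by (auto simp: algebra_simps)
  next
    case 2
    have "a0 = b \<and> b0 = a \<and> p0 * p = (1-p0) * (1-p)"
      by (rule E4_final[OF 2 pos(1,2,4,3) ne(1)]) (use H E4_swapy in metis)
    then show ?thesis using lt by simp
  next
    case 3
    have "b0 = a \<and> a0 = b \<and> (1-p0) * (1-p) = p0 * p"
      by (rule E4_final[OF 3 pos(2,1,3,4) ne(2)]) (use H E4_swapx in metis)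
    then show ?thesis using lt by simp
  next
    case 4
    have "b0 = b \<and> a0 = a \<and> (1-p0) * p = p0 * (1-p)"
      by (rule E4_final[OF 4 pos(2,1,4,3) ne(2)]) (use H E4_swapx E4_swapy in metis)
    then show ?thesis by (auto simp: algebra_simps)
  qed
qed


lemma dens_facts:
  assumes "prob_density f"
  shows "f \<in> borel_measurable borel" "\<And>x. 0 \<le> f x" "integrable lborel f" "(LINT x|lborel. f x) = 1"
  using assms unfolding prob_density_def by auto

lemma meas_cisf:
  assumes [measurable]: "f \<in> borel_measurable borel"
  shows "(\<lambda>x. cis (x * u) * complex_of_real (f x)) \<in> borel_measurable borel"
proof -
  have [measurable]: "(\<lambda>x. cis (x * u)) \<in> borel_measurable borel"
    by (intro borel_measurable_continuous_onI continuous_intros)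
  show ?thesis by measurable
qed

lemma integrable_cisf:
  assumes "prob_density f"
  shows "integrable lborel (\<lambda>x. cis (x * u) * complex_of_real (f x))"
proof (rule Bochner_Integration.integrable_bound[OF dens_facts(3)[OF assms]])
  have [measurable]: "f \<in> borel_measurable borel" using dens_facts(1)[OF assms] .
  show "(\<lambda>x. cis (x * u) * complex_of_real (f x)) \<in> borel_measurable lborel"
    using meas_cisf[OF dens_facts(1)[OF assms]] by simp
  show "AE x in lborel. norm (cis (x * u) * complex_of_real (f x)) \<le> norm (f x)"
    by (simp add: norm_mult)
qed

lemma fourier_shift:
  assumes "prob_density f"
  shows "fourier (\<lambda>x. f (x - a)) u = cis (u * a) * fourier f u"
proof -
  have "fourier (\<lambda>x. f (x - a)) u = (LINT x|lborel. cis ((a + 1 * x) * u) * complex_of_real (f (a + 1 * x - a)))"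
    unfolding fourier_def
    using lborel_integral_real_affine[of 1 "\<lambda>x. cis (x * u) * complex_of_real (f (x - a))" a] by simp
  also have "\<dots> = (LINT x|lborel. cis (u * a) * (cis (x * u) * complex_of_real (f x)))"
    by (intro Bochner_Integration.integral_cong refl) (simp add: cis_mult algebra_simps)
  also have "\<dots> = cis (u * a) * fourier f u" unfolding fourier_def by simp
  finally show ?thesis .
qed

lemma fourier_real:
  assumes symm: "\<forall>x. f x = f (- x)"
  shows "cnj (fourier f u) = fourier f u"
proof -
  have "cnj (fourier f u) = (LINT x|lborel. cis (- (x * u)) * complex_of_real (f x))"
  proof -
    have "cnj (fourier f u) = (LINT x|lborel. cnj (cis (x * u) * complex_of_real (f x)))"
      unfolding fourier_def by (rule Bochner_Integration.integral_cnj[symmetric])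
    then show ?thesis by (simp add: cis_cnj)
  qed
  also have "\<dots> = (LINT x|lborel. cis (- ((0 + (-1) * x) * u)) * complex_of_real (f (0 + (-1) * x)))"
    using lborel_integral_real_affine[of "-1" "\<lambda>x. cis (- (x * u)) * complex_of_real (f x)" 0] by simp
  also have "\<dots> = fourier f u"
    unfolding fourier_def using symm[rule_format, symmetric]
    by (intro Bochner_Integration.integral_cong refl) simp
  finally show ?thesis .
qed

lemma fourier_zero:
  assumes "prob_density f"
  shows "fourier f 0 = 1"
  using dens_facts(4)[OF assms] unfolding fourier_def by simp

lemma fourier_norm:
  assumes "prob_density f"
  shows "norm (fourier f u) \<le> 1"
proof -
  have "norm (fourier f u) \<le> (LINT x|lborel. f x)"
    unfolding fourier_def
    by (rule Bochner_Integration.integral_norm_bound_integral[OF integrable_cisf[OF assms] dens_facts(3)[OF assms]])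
       (simp add: norm_mult dens_facts(2)[OF assms])
  then show ?thesis using dens_facts(4)[OF assms] by simp
qed

lemma fourier_cont:
  assumes "prob_density f"
  shows "isCont (fourier f) t"
  unfolding continuous_at_sequentially
proof safe
  have [measurable]: "f \<in> borel_measurable borel" using dens_facts(1)[OF assms] .
  fix X assume X: "X \<longlonglongrightarrow> t"
  show "(fourier f \<circ> X) \<longlonglongrightarrow> fourier f t"
    unfolding comp_def fourier_def
    by (rule integral_dominated_convergence[where w="f"])
       (auto intro!: tendsto_intros X dens_facts(3)[OF assms] meas_cisf simp: norm_mult dens_facts(2)[OF assms])
qed

lemma integrable_shift:
  assumes "prob_density f"
  shows "integrable lborel (\<lambda>x. cis (x * u) * complex_of_real (f (x - a)))"
proof -
  have [measurable]: "f \<in> borel_measurable borel" using dens_facts(1)[OF assms] .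
  have i: "integrable lborel (\<lambda>x. f (- a + 1 * x))"
    by (rule lborel_integrable_real_affine[OF dens_facts(3)[OF assms]]) simp
  have m: "(\<lambda>x. f (x - a)) \<in> borel_measurable borel" by measurable
  show ?thesis
  proof (rule Bochner_Integration.integrable_bound[OF i])
    show "(\<lambda>x. cis (x * u) * complex_of_real (f (x - a))) \<in> borel_measurable lborel"
      using meas_cisf[OF m] by simp
    show "AE x in lborel. norm (cis (x * u) * complex_of_real (f (x - a))) \<le> norm (f (- a + 1 * x))"
      by (simp add: norm_mult)
  qed
qed

lemma fourier_mix:
  assumes "prob_density f"
  shows "fourier (\<lambda>x. p0 * f (x - a0) + (1 - p0) * f (x - b0)) u = fourier f u * mixM (p0, a0, b0) u"
proof -
  have "fourier (\<lambda>x. p0 * f (x - a0) + (1 - p0) * f (x - b0)) u =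
     (LINT x|lborel. complex_of_real p0 * (cis (x * u) * complex_of_real (f (x - a0))) +
                     complex_of_real (1 - p0) * (cis (x * u) * complex_of_real (f (x - b0))))"
    unfolding fourier_def by (intro Bochner_Integration.integral_cong refl) (simp add: algebra_simps)
  also have "\<dots> = complex_of_real p0 * fourier (\<lambda>x. f (x - a0)) u + complex_of_real (1 - p0) * fourier (\<lambda>x. f (x - b0)) u"
    unfolding fourier_def
    by (subst Bochner_Integration.integral_add) (auto intro!: integrable_mult_right integrable_shift[OF assms])
  also have "\<dots> = fourier f u * mixM (p0, a0, b0) u"
    unfolding fourier_shift[OF assms] mixM_def by (simp add: algebra_simps)
  finally show ?thesis .
qed

lemma mixM_lower:
  assumes "0 < p" "p < 1/2"
  shows "norm (mixM (p, a, b) u) \<ge> 1 - 2 * p"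
proof -
  have "norm (complex_of_real (1 - p) * cis (u * b)) - norm (complex_of_real p * cis (u * a))
        \<le> norm (complex_of_real p * cis (u * a) + complex_of_real (1 - p) * cis (u * b))"
    by (metis add.commute norm_diff_ineq)
  then show ?thesis using assms by (simp add: mixM_def norm_mult del: of_real_diff)
qed

lemma mixM_nz:
  assumes "0 < p" "p < 1/2"
  shows "mixM (p, a, b) u \<noteq> 0"
  using mixM_lower[OF assms, of a b u] assms by auto

lemma mixM_le:
  assumes "0 \<le> p" "p \<le> 1"
  shows "norm (mixM (p, a, b) u) \<le> 1"
proof -
  have "norm (mixM (p, a, b) u) \<le> norm (complex_of_real p * cis (u * a)) + norm (complex_of_real (1 - p) * cis (u * b))"
    unfolding mixM_def by (simp add: norm_triangle_ineq)
  then show ?thesis using assms by (simp add: norm_mult del: of_real_diff)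
qed

lemma mixM_cont: "isCont (mixM (p, a, b)) u"
  unfolding mixM_def cis_conv_exp prod.case by (intro continuous_intros)

lemma mix_expand:
  "mixM (p0, a0, b0) u * cnj (mixM (p, a, b) u) - cnj (mixM (p0, a0, b0) u) * mixM (p, a, b) u =
   (\<Sum>k\<in>UNIV. complex_of_real (cf p0 p k) * exp (\<i> * complex_of_real (omf a0 b0 a b k * u)))"
  unfolding sum_bool3 mixM_def omf_def cf_def cis_conv_exp[symmetric]
  by (simp add: cis_cnj algebra_simps cis_mult)

theorem proposition1:
  fixes f :: "real \<Rightarrow> real"
    and \<Theta> :: "(real \<times> real \<times> real) set"
    and p0 \<alpha>0 \<beta>0 :: real
    and W :: "real measure"
  assumes dens: "prob_density f"
    and L2: "integrable lborel (\<lambda>x. (f x)\<^sup>2)"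
    and symm: "\<forall>x. f x = f (- x)"
    and compact: "compact \<Theta>"
    and Theta_sub: "\<Theta> \<subseteq> {(p, a, b). 0 < p \<and> p < 1/2 \<and> a \<noteq> b}"
    and theta0: "(p0, \<alpha>0, \<beta>0) \<in> \<Theta>"
    and W_prob: "prob_space W"
    and W_sets: "sets W = sets borel"
    and W_ac: "absolutely_continuous lborel W"
    and W_supp: "measure_support W = UNIV"
  shows "\<forall>\<theta>\<in>\<Theta>.
           0 \<le> contrastS W (\<lambda>x. p0 * f (x - \<alpha>0) + (1 - p0) * f (x - \<beta>0)) \<theta>
         \<and> (contrastS W (\<lambda>x. p0 * f (x - \<alpha>0) + (1 - p0) * f (x - \<beta>0)) \<theta> = 0
              \<longleftrightarrow> \<theta> = (p0, \<alpha>0, \<beta>0))"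
proof
  fix \<theta> assume th: "\<theta> \<in> \<Theta>"
  define g where "g = (\<lambda>x. p0 * f (x - \<alpha>0) + (1 - p0) * f (x - \<beta>0))"
  obtain p a b where th_eq: "\<theta> = (p, a, b)" by (cases \<theta>) auto
  have pab: "0 < p" "p < 1/2" "a \<noteq> b" using th Theta_sub th_eq by auto
  have p0ab: "0 < p0" "p0 < 1/2" "\<alpha>0 \<noteq> \<beta>0" using theta0 Theta_sub by auto
  have Freal: "fourier f u = complex_of_real (Re (fourier f u))" for u
    using fourier_real[OF symm, of u] by (simp add: complex_eq_iff)
  have gF: "fourier g u = fourier f u * mixM (p0, \<alpha>0, \<beta>0) u" for u
    unfolding g_def by (rule fourier_mix[OF dens])
  define M where "M = mixM (p, a, b)"
  define M0 where "M0 = mixM (p0, \<alpha>0, \<beta>0)"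
  define h where "h u = (Im (fourier g u / M u))\<^sup>2" for u
  have Mnz: "M u \<noteq> 0" for u unfolding M_def by (rule mixM_nz[OF pab(1,2)])
  have M0nz: "M0 u \<noteq> 0" for u unfolding M0_def by (rule mixM_nz[OF p0ab(1,2)])
  have S_eq: "contrastS W g \<theta> = integral\<^sup>L W h"
    unfolding contrastS_def h_def th_eq M_def ..
  have hnn: "0 \<le> h u" for u unfolding h_def by simp
  have hcont: "isCont h u" for u
  proof -
    have "isCont (fourier g) u" unfolding gF[abs_def]
      by (intro continuous_intros fourier_cont[OF dens] mixM_cont)
    moreover have "isCont M u" unfolding M_def by (rule mixM_cont)
    ultimately show ?thesis unfolding h_def using Mnz[of u] by (intro continuous_intros) auto
  qed
  have hmeas_b: "h \<in> borel_measurable borel"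
    by (intro borel_measurable_continuous_onI continuous_at_imp_continuous_on ballI hcont)
  have hmeas: "h \<in> borel_measurable W"
    using hmeas_b measurable_cong_sets[OF W_sets refl] by blast
  have hbound: "norm (h u) \<le> (1 / (1 - 2 * p))\<^sup>2" for u
  proof -
    have "norm (fourier g u / M u) = norm (fourier f u) * norm (M0 u) / norm (M u)"
      unfolding gF M0_def by (simp add: norm_mult norm_divide)
    also have "\<dots> \<le> 1 / (1 - 2 * p)"
    proof (rule frac_le)
      show "norm (fourier f u) * norm (M0 u) \<le> 1"
        using fourier_norm[OF dens, of u] mixM_le[of p0 \<alpha>0 \<beta>0 u] p0ab unfolding M0_def
        by (intro mult_le_one) auto
      show "1 - 2 * p \<le> norm (M u)" unfolding M_def by (rule mixM_lower[OF pab(1,2)])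
    qed (use pab in auto)
    finally have n1: "norm (fourier g u / M u) \<le> 1 / (1 - 2 * p)" .
    have "\<bar>Im (fourier g u / M u)\<bar> \<le> 1 / (1 - 2 * p)"
      using abs_Im_le_cmod n1 by (rule order_trans)
    then have "\<bar>Im (fourier g u / M u)\<bar>\<^sup>2 \<le> (1 / (1 - 2 * p))\<^sup>2"
      by (intro power_mono) auto
    then show ?thesis unfolding h_def by simp
  qed
  have fin: "finite_measure W" using W_prob unfolding prob_space_def by simp
  have hint: "integrable W h"
    by (rule finite_measure.integrable_const_bound[OF fin _ hmeas]) (use hbound in auto)
  have spaceW: "space W = UNIV" using sets_eq_imp_space_eq[OF W_sets] by simp
  show "0 \<le> contrastS W g \<theta> \<and> (contrastS W g \<theta> = 0 \<longleftrightarrow> \<theta> = (p0, \<alpha>0, \<beta>0))"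
  proof (intro conjI iffI)
    show "0 \<le> contrastS W g \<theta>" unfolding S_eq by (rule Bochner_Integration.integral_nonneg) (use hnn in auto)
  next
    assume "\<theta> = (p0, \<alpha>0, \<beta>0)"
    then have "M = M0" unfolding M_def M0_def th_eq by simp
    then have "h u = 0" for u
      unfolding h_def gF using M0nz[of u] Freal[of u] unfolding M0_def
      by (metis (no_types, lifting) Im_complex_of_real nonzero_mult_div_cancel_right power_zero_numeral)
    then have "h = (\<lambda>_. 0)" by (intro ext)
    then show "contrastS W g \<theta> = 0" unfolding S_eq by simp
  next
    assume S0: "contrastS W g \<theta> = 0"
    have AE0: "AE u in W. h u = 0"
      using S0 unfolding S_eq by (subst (asm) integral_nonneg_eq_0_iff_AE[OF hint]) (use hnn in auto)
    have hz: "h u = 0" for u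
    proof (rule ccontr)
      assume "h u \<noteq> 0"
      then obtain e where e: "e > 0" "\<And>y. dist u y < e \<Longrightarrow> h y \<noteq> 0"
        using continuous_at_avoid[OF hcont] by blast
      have bs: "ball u e \<in> sets W" using W_sets by simp
      have "AE y in W. y \<notin> ball u e"
        using AE0 by eventually_elim (use e in \<open>auto simp: dist_commute\<close>)
      then have "emeasure W (ball u e) = 0"
        by (subst (asm) AE_iff_measurable[OF bs]) (auto simp: spaceW)
      moreover have "0 < emeasure W (ball u e)"
        using W_supp e(1) unfolding measure_support_def by auto
      ultimately show False by simp
    qed
    obtain d where d: "d > 0" "\<And>y. dist 0 y < d \<Longrightarrow> fourier f y \<noteq> 0"
      using continuous_at_avoid[OF fourier_cont[OF dens], of 0 0] fourier_zero[OF dens] by auto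
    have Z: "(\<Sum>k\<in>UNIV. complex_of_real (cf p0 p k) * exp (\<i> * complex_of_real (omf \<alpha>0 \<beta>0 a b k * u))) = 0"
      if u: "u \<in> ball 0 d" for u
    proof -
      define r where "r = Re (fourier f u)"
      have r0: "r \<noteq> 0" using d(2)[of u] u Freal[of u] unfolding r_def by auto
      have "Im (fourier g u / M u) = 0" using hz[of u] unfolding h_def by simp
      moreover have "fourier g u / M u = complex_of_real r * (M0 u / M u)"
        unfolding gF M0_def[symmetric] r_def using Freal[of u] by (metis times_divide_eq_right)
      ultimately have "Im (complex_of_real r * (M0 u / M u)) = 0" by simp
      moreover have "Im (complex_of_real r * z) = r * Im z" for z by simp
      ultimately have "r * Im (M0 u / M u) = 0" by metis
      then have im0: "Im (M0 u / M u) = 0" using r0 by simp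
      define c where "c = Re (M0 u / M u)"
      have "M0 u / M u = complex_of_real c" using im0 unfolding c_def by (simp add: complex_eq_iff)
      then have M0c: "M0 u = complex_of_real c * M u" using Mnz[of u] by (simp add: field_simps)
      have "M0 u * cnj (M u) - cnj (M0 u) * M u = 0" unfolding M0c by simp
      then show ?thesis unfolding M0_def M_def mix_expand .
    qed
    have E: "(\<Sum>k\<in>{k\<in>UNIV. omf \<alpha>0 \<beta>0 a b k = w}. complex_of_real (cf p0 p k)) = 0" for w
      by (rule exp_sum_zero[of UNIV "ball 0 d" 0]) (use Z d(1) in auto)
    have "E4 \<alpha>0 \<beta>0 a b (p0*p) (p0*(1-p)) ((1-p0)*p) ((1-p0)*(1-p)) w = 0" for w
    proof -
      have "complex_of_real (\<Sum>k\<in>{k\<in>UNIV. omf \<alpha>0 \<beta>0 a b k = w}. cf p0 p k) = 0"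
        using E[of w] by (simp only: of_real_sum)
      then show ?thesis unfolding sum_E4[symmetric] by (simp only: of_real_eq_0_iff)
    qed
    then have "p = p0 \<and> a = \<alpha>0 \<and> b = \<beta>0"
      by (intro params_eq p0ab pab)
    then show "\<theta> = (p0, \<alpha>0, \<beta>0)" using th_eq by simp
  qed
qed
end
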